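(* Let $f:\mathbb{R}^n\to\mathbb{R}$ be convex, with the constants $L_j$ as in the context. Then for any $j\in\{1,\dots,n\}$ and all $x',x''\in\mathcal F$, \[ f(x'')\le f(x')+\nabla f(x')^T(x''-x')+\frac{L_j}{2}\|x'-x''\|_{\langle j\rangle}^2. \]
   Context: $n\ge2$; $\mathcal F=\{x\in\mathbb{R}^n: e^Tx=b,\ l_i\le x_i\le u_i\}$ with $e$ the all-ones vector, $b\in\mathbb{R}$, $l_i\in\mathbb{R}\cup\{-\infty\}$, $u_i\in\mathbb{R}\cup\{+\infty\}$, $l_i<u_i$. $f$ is continuously differentiable with Lipschitz continuous gradient on $\mathbb{R}^n$. For $i\ne j$, $L_{i,j}>0$ are constants such that for every $x\in\mathbb{R}^n$ and $s,t\in\mathbb{R}$, $|\nabla f(x+s(e_i-e_j))^T(e_i-e_j)-\nabla f(x+t(e_i-e_j))^T(e_i-e_j)|\le L_{i,j}|s-t|$ ($e_i$ the $i$th unit vector); $L_{i,i}=0$; $L_j=\sum_{i=1}^nL_{i,j}$. $\|x\|_{\langle j\rangle}=\sqrt{\sum_{i\ne j}x_i^2}$. *)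

theory Defs
  imports "HOL-Analysis.Analysis" "HOL-Library.Extended_Real"
begin

definition feasible :: "real \<Rightarrow> ('n::finite \<Rightarrow> ereal) \<Rightarrow> ('n \<Rightarrow> ereal) \<Rightarrow> (real^'n) set" where
  "feasible b l u = {x. (\<Sum>i\<in>UNIV. x $ i) = b \<and> (\<forall>i. l i \<le> ereal (x $ i) \<and> ereal (x $ i) \<le> u i)}"

definition norm_excl :: "'n::finite \<Rightarrow> real^'n \<Rightarrow> real" where
  "norm_excl j x = sqrt (\<Sum>i\<in>UNIV - {j}. (x $ i)^2)"

end

theory Submission
  imports Defs
begin

lemma descent:
  fixes f :: "'a::real_inner \<Rightarrow> real"
  assumes grad: "\<And>x. (f has_derivative (\<lambda>h. g x \<bullet> h)) (at x)"
    and lb: "\<And>s t. \<bar>g (x + s *\<^sub>R v) \<bullet> v - g (x + t *\<^sub>R v) \<bullet> v\<bar> \<le> L * \<bar>s - t\<bar>"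
  shows "f (x + \<tau> *\<^sub>R v) \<le> f x + \<tau> * (g x \<bullet> v) + L/2 * \<tau>^2"
proof -
  define h where "h t = f (x + t *\<^sub>R v) - t * (g x \<bullet> v) - L/2 * t^2" for t
  define D where "D t = g (x + t *\<^sub>R v) \<bullet> v - g x \<bullet> v - L * t" for t
  have hd: "(h has_derivative (\<lambda>k. k * D t)) (at t)" for t
  proof -
    have 1: "((\<lambda>t. x + t *\<^sub>R v) has_derivative (\<lambda>k. k *\<^sub>R v)) (at t)"
      by (auto intro!: derivative_eq_intros)
    have 2: "((\<lambda>t. f (x + t *\<^sub>R v)) has_derivative (\<lambda>k. g (x + t *\<^sub>R v) \<bullet> (k *\<^sub>R v))) (at t)"
      using has_derivative_compose[OF 1 grad] by (simp add: o_def)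
    show ?thesis unfolding h_def D_def
      by (rule 2 derivative_eq_intros refl | simp)+ (simp add: algebra_simps power2_eq_square)
  qed
  have Dle: "k * D k \<le> 0" for k
  proof -
    have "\<bar>g (x + k *\<^sub>R v) \<bullet> v - g (x + 0 *\<^sub>R v) \<bullet> v\<bar> \<le> L * \<bar>k - 0\<bar>" by (rule lb)
    then have "\<bar>g (x + k *\<^sub>R v) \<bullet> v - g x \<bullet> v\<bar> \<le> L * \<bar>k\<bar>" by simp
    then have a: "\<bar>k\<bar> * \<bar>g (x + k *\<^sub>R v) \<bullet> v - g x \<bullet> v\<bar> \<le> \<bar>k\<bar> * (L * \<bar>k\<bar>)"
      by (rule mult_left_mono) simp
    have b: "k * (g (x + k *\<^sub>R v) \<bullet> v - g x \<bullet> v) \<le> \<bar>k\<bar> * \<bar>g (x + k *\<^sub>R v) \<bullet> v - g x \<bullet> v\<bar>"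
      by (metis abs_ge_self abs_mult)
    have c: "\<bar>k\<bar> * (L * \<bar>k\<bar>) = L * (k * k)" by (simp add: abs_mult_self_eq mult.left_commute)
    show ?thesis unfolding D_def using a b c by (simp add: algebra_simps)
  qed
  have "h \<tau> \<le> h 0"
  proof (cases "\<tau> \<ge> 0")
    case True
    then obtain \<xi> where "\<xi> \<in> {0..\<tau>}" "h \<tau> - h 0 = (\<tau> - 0) * D \<xi>"
      using mvt_very_simple[of 0 \<tau> h "\<lambda>t k. k * D t"] hd has_derivative_at_withinI by blast
    moreover have "\<tau> * D \<xi> \<le> 0"
    proof (cases "\<xi> = 0")
      case False
      with \<open>\<xi> \<in> {0..\<tau>}\<close> have "\<xi> > 0" by auto
      from Dle[of \<xi>] this have "D \<xi> \<le> 0" by (simp add: mult_le_0_iff)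
      then show ?thesis using True by (simp add: mult_le_0_iff)
    qed (simp add: D_def)
    ultimately show ?thesis by simp
  next
    case False
    then obtain \<xi> where "\<xi> \<in> {\<tau>..0}" "h 0 - h \<tau> = (0 - \<tau>) * D \<xi>"
      using mvt_very_simple[of \<tau> 0 h "\<lambda>t k. k * D t"] hd has_derivative_at_withinI by fastforce
    moreover have "\<tau> * D \<xi> \<le> 0"
    proof (cases "\<xi> = 0")
      case False
      with \<open>\<xi> \<in> {\<tau>..0}\<close> have "\<xi> < 0" by auto
      from Dle[of \<xi>] this have "D \<xi> \<ge> 0" by (simp add: mult_le_0_iff)
      then show ?thesis using \<open>\<not> \<tau> \<ge> 0\<close> by (simp add: mult_le_0_iff)
    qed (simp add: D_def)
    ultimately show ?thesis by simp
  qed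
  then show ?thesis unfolding h_def by simp
qed
theorem lemma4:
  fixes f :: "real^'n \<Rightarrow> real" and g :: "real^'n \<Rightarrow> real^'n"
    and b :: real and l u :: "'n \<Rightarrow> ereal"
    and L :: "'n \<Rightarrow> 'n \<Rightarrow> real" and j :: 'n and x' x'' :: "real^'n"
  assumes n2: "CARD('n) \<ge> 2"
    and lu: "\<And>i. l i \<noteq> \<infinity> \<and> u i \<noteq> -\<infinity> \<and> l i < u i"
    and grad: "\<And>x. (f has_derivative (\<lambda>h. g x \<bullet> h)) (at x)"
    and lip: "\<exists>K. \<forall>x y. norm (g x - g y) \<le> K * norm (x - y)"
    and Lpos: "\<And>i k. i \<noteq> k \<Longrightarrow> L i k > 0"
    and Ldiag: "\<And>i. L i i = 0"
    and Lbound: "\<And>i k x s t. i \<noteq> k \<Longrightarrow>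
        \<bar>g (x + s *\<^sub>R (axis i 1 - axis k 1)) \<bullet> (axis i 1 - axis k 1)
         - g (x + t *\<^sub>R (axis i 1 - axis k 1)) \<bullet> (axis i 1 - axis k 1)\<bar> \<le> L i k * \<bar>s - t\<bar>"
    and cvx: "convex_on UNIV f"
    and x1: "x' \<in> feasible b l u" and x2: "x'' \<in> feasible b l u"
  shows "f x'' \<le> f x' + g x' \<bullet> (x'' - x') + (\<Sum>i\<in>UNIV. L i j) / 2 * (norm_excl j (x' - x''))^2"
proof -
  define S where "S = UNIV - {j}"
  define d where "d = x'' - x'"
  define w :: "'n \<Rightarrow> real^'n" where "w i = axis i 1 - axis j 1" for i
  define Lj where "Lj = (\<Sum>i\<in>UNIV. L i j)"
  have finS: "finite S" by (simp add: S_def)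
  have "card S = CARD('n) - 1" unfolding S_def by (simp add: card_Diff_singleton)
  then have Sne: "S \<noteq> {}" using n2 by auto
  have LjS: "Lj = (\<Sum>i\<in>S. L i j)"
    unfolding Lj_def S_def using Ldiag[of j] by (simp add: sum.remove[of UNIV j])
  have Lpos': "\<And>i. i \<in> S \<Longrightarrow> L i j > 0" using Lpos unfolding S_def by auto
  have Ljpos: "Lj > 0" unfolding LjS using Sne finS Lpos' by (simp add: sum_pos)
  have sumd: "(\<Sum>i\<in>UNIV. d $ i) = 0"
    using x1 x2 unfolding feasible_def d_def by (simp add: sum_subtractf)
  have sumd': "d $ j = - (\<Sum>i\<in>S. d $ i)"
    using sumd unfolding S_def by (simp add: sum.remove[of UNIV j])
  have decomp: "(\<Sum>i\<in>S. (d $ i) *\<^sub>R w i) = d"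
  proof (rule vec_eq_iff[THEN iffD2, rule_format])
    fix k
    have "(\<Sum>i\<in>S. (d $ i) *\<^sub>R w i) $ k = (\<Sum>i\<in>S. d $ i * (if k = i then 1 else 0)) - (if k = j then 1 else 0) * (\<Sum>i\<in>S. d $ i)"
      unfolding w_def by (simp add: axis_def sum_subtractf right_diff_distrib sum_distrib_left mult.commute)
    also have "\<dots> = d $ k"
    proof (cases "k = j")
      case True
      then have "(\<Sum>i\<in>S. d $ i * (if k = i then 1 else 0)) = 0" by (simp add: S_def)
      then show ?thesis using True sumd' by simp
    next
      case False
      then have "k \<in> S" by (simp add: S_def)
      then have "(\<Sum>i\<in>S. d $ i * (if k = i then 1 else 0)) = d $ k"
        using finS by (simp add: if_distrib cong: if_cong)
      then show ?thesis using False by simp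
    qed
    finally show "(\<Sum>i\<in>S. (d $ i) *\<^sub>R w i) $ k = d $ k" .
  qed
  define lam where "lam i = L i j / Lj" for i
  define tau where "tau i = d $ i * Lj / L i j" for i
  define y where "y i = x' + tau i *\<^sub>R w i" for i
  have lamtau: "lam i * tau i = d $ i" if iS: "i \<in> S" for i
    using Lpos'[OF iS] Ljpos unfolding lam_def tau_def by (simp add: field_simps)
  have lamsum: "(\<Sum>i\<in>S. lam i) = 1"
    unfolding lam_def LjS[symmetric] sum_divide_distrib[symmetric] using Ljpos by simp
  have "(\<Sum>i\<in>S. lam i *\<^sub>R y i) = (\<Sum>i\<in>S. lam i *\<^sub>R x') + (\<Sum>i\<in>S. (lam i * tau i) *\<^sub>R w i)"
    unfolding y_def by (simp add: scaleR_add_right sum.distrib)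
  also have "\<dots> = x' + d"
    using lamtau decomp lamsum by (simp add: scaleR_sum_left[symmetric])
  also have "\<dots> = x''" by (simp add: d_def)
  finally have comb: "(\<Sum>i\<in>S. lam i *\<^sub>R y i) = x''" .
  have lamnn: "lam i \<ge> 0" if iS: "i \<in> S" for i
    using Lpos'[OF iS] Ljpos unfolding lam_def by simp
  have "f x'' \<le> (\<Sum>i\<in>S. lam i * f (y i))"
    unfolding comb[symmetric]
    by (rule convex_on_sum[OF finS Sne cvx lamsum]) (simp_all add: lamnn)
  also have "\<dots> \<le> (\<Sum>i\<in>S. lam i * (f x' + tau i * (g x' \<bullet> w i) + L i j / 2 * (tau i)^2))"
  proof (rule sum_mono)
    fix i assume iS: "i \<in> S"
    then have "i \<noteq> j" by (simp add: S_def)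
    have "f (y i) \<le> f x' + tau i * (g x' \<bullet> w i) + L i j / 2 * (tau i)^2"
      unfolding y_def w_def
      by (rule descent[OF grad]) (rule Lbound[OF \<open>i \<noteq> j\<close>])
    then show "lam i * f (y i) \<le> lam i * (f x' + tau i * (g x' \<bullet> w i) + L i j / 2 * (tau i)^2)"
      using Lpos'[OF iS] Ljpos by (intro mult_left_mono) (auto simp: lam_def)
  qed
  also have "\<dots> = (\<Sum>i\<in>S. lam i * f x' + d $ i * (g x' \<bullet> w i) + Lj / 2 * (d $ i)^2)"
  proof (rule sum.cong[OF refl])
    fix i assume iS: "i \<in> S"
    have "lam i * (L i j / 2 * (tau i)^2) = Lj / 2 * (d $ i)^2"
      using Lpos'[OF iS] Ljpos unfolding lam_def tau_def by (simp add: field_simps power2_eq_square)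
    then show "lam i * (f x' + tau i * (g x' \<bullet> w i) + L i j / 2 * (tau i)^2) = lam i * f x' + d $ i * (g x' \<bullet> w i) + Lj / 2 * (d $ i)^2"
      using lamtau[OF iS] by (simp add: algebra_simps)
  qed
  also have "\<dots> = f x' + g x' \<bullet> d + Lj / 2 * (\<Sum>i\<in>S. (d $ i)^2)"
  proof -
    have "(\<Sum>i\<in>S. d $ i * (g x' \<bullet> w i)) = g x' \<bullet> d"
    proof -
      have "g x' \<bullet> d = g x' \<bullet> (\<Sum>i\<in>S. (d $ i) *\<^sub>R w i)" by (simp only: decomp)
      then show ?thesis by (simp add: inner_sum_right)
    qed
    moreover have "(\<Sum>i\<in>S. lam i * f x') = f x'"
      using lamsum by (simp add: sum_distrib_right[symmetric])
    moreover have "(\<Sum>i\<in>S. Lj / 2 * (d $ i)^2) = Lj / 2 * (\<Sum>i\<in>S. (d $ i)^2)"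
      by (simp add: sum_distrib_left)
    ultimately show ?thesis
      by (simp only: sum.distrib)
  qed
  also have "(\<Sum>i\<in>S. (d $ i)^2) = (norm_excl j (x' - x''))^2"
  proof -
    have "(\<Sum>i\<in>S. (d $ i)^2) = (\<Sum>i\<in>S. ((x' - x'') $ i)^2)"
      unfolding d_def by (intro sum.cong refl) (simp add: power2_commute)
    then show ?thesis unfolding norm_excl_def S_def
      by (simp add: sum_nonneg)
  qed
  finally show ?thesis unfolding Lj_def d_def .
qed

end
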